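(* Let $s$ be a positive integer and $G$ an undirected graph. There exists an $(s,s)$-dissolution for $G$ if and only if $G$ has a perfect matching.
   Context: For $V'\subseteq V(G)$ let $Z(V',G):=\{(x,y)\mid x\in V',\ y\in V(G)\setminus V',\ \{x,y\}\in E(G)\}$. For positive integers $s,\Delta_s$, an $(s,\Delta_s)$-dissolution for $G$ is a pair $(D,z)$ with $D\subset V(G)$ and $z\colon Z(D,G)\to\{0,\dots,s\}$ such that (a) each $v'\in D$ satisfies $\sum_{(v',v)\in Z(D,G)} z(v',v)=s$, and (b) each $v\in V(G)\setminus D$ satisfies $\sum_{(v',v)\in Z(D,G)} z(v',v)=\Delta_s$. *)

theory Defs
  imports Main
begin

definition simple_graph :: "'a set \<Rightarrow> 'a set set \<Rightarrow> bool" where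
  "simple_graph V E \<longleftrightarrow> finite V \<and>
     (\<forall>e\<in>E. \<exists>x y. x \<noteq> y \<and> e = {x, y} \<and> x \<in> V \<and> y \<in> V)"

definition Zset :: "'a set \<Rightarrow> 'a set set \<Rightarrow> 'a set \<Rightarrow> ('a \<times> 'a) set" where
  "Zset V E D = {(x, y). x \<in> D \<and> y \<in> V - D \<and> {x, y} \<in> E}"

text \<open>(s, Delta_s)-dissolution (D, z) for G = (V, E); only the values of z on Z(D,G) matter.\<close>
definition dissolution :: "nat \<Rightarrow> nat \<Rightarrow> 'a set \<Rightarrow> 'a set set \<Rightarrow> 'a set \<Rightarrow> ('a \<times> 'a \<Rightarrow> nat) \<Rightarrow> bool" where
  "dissolution s \<Delta> V E D z \<longleftrightarrow> D \<subseteq> V \<and>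
     (\<forall>p\<in>Zset V E D. z p \<le> s) \<and>
     (\<forall>v'\<in>D. (\<Sum>p\<in>{p \<in> Zset V E D. fst p = v'}. z p) = s) \<and>
     (\<forall>v\<in>V - D. (\<Sum>p\<in>{p \<in> Zset V E D. snd p = v}. z p) = \<Delta>)"

definition perfect_matching :: "'a set \<Rightarrow> 'a set set \<Rightarrow> 'a set set \<Rightarrow> bool" where
  "perfect_matching V E M \<longleftrightarrow> M \<subseteq> E \<and> (\<forall>v\<in>V. \<exists>!e\<in>M. v \<in> e)"

end

theory Submission imports Defs begin

lemma hall:
  fixes A :: "'a set" and N :: "'a \<Rightarrow> 'b set"
  assumes "finite A" "\<forall>x\<in>A. finite (N x)"
    "\<forall>X\<subseteq>A. card X \<le> card (\<Union>(N ` X))"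
  shows "\<exists>f. inj_on f A \<and> (\<forall>x\<in>A. f x \<in> N x)"
  using assms
proof (induction "card A" arbitrary: A N rule: less_induct)
  case less
  show ?case
  proof (cases "A = {}")
    case True then show ?thesis by auto
  next
    case ne: False
    show ?thesis
    proof (cases "\<forall>X. X \<subseteq> A \<and> X \<noteq> {} \<and> X \<noteq> A \<longrightarrow> card X < card (\<Union>(N ` X))")
      case True
      obtain a where aA: "a \<in> A" using ne by auto
      have "card {a} \<le> card (N a)" using less.prems(3) aA
        by (metis cSup_singleton empty_subsetI image_empty image_insert insert_subset)
      hence "N a \<noteq> {}" by auto
      then obtain b where b: "b \<in> N a" by auto
      define A' where "A' = A - {a}"
      define N' where "N' = (\<lambda>x. N x - {b})"
      have cA: "card A' < card A" unfolding A'_def using aA less.prems(1)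
        by (meson card_Diff1_less)
      have fA: "finite A'" unfolding A'_def using less.prems(1) by auto
      have fN: "\<forall>x\<in>A'. finite (N' x)" unfolding A'_def N'_def using less.prems(2) by auto
      have hall': "\<forall>X\<subseteq>A'. card X \<le> card (\<Union>(N' ` X))"
      proof (intro allI impI)
        fix X assume X: "X \<subseteq> A'"
        show "card X \<le> card (\<Union>(N' ` X))"
        proof (cases "X = {}")
          case True then show ?thesis by simp
        next
          case False
          have "X \<noteq> A" using X aA unfolding A'_def by auto
          moreover have "X \<subseteq> A" using X unfolding A'_def by auto
          ultimately have lt: "card X < card (\<Union>(N ` X))" using True False by blast
          have eq: "\<Union>(N' ` X) = \<Union>(N ` X) - {b}" unfolding N'_def by auto
          have "finite (\<Union>(N ` X))" using \<open>X \<subseteq> A\<close> less.prems(1,2)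
            by (meson finite_UN_I finite_subset subsetD)
          hence "card (\<Union>(N ` X)) \<le> Suc (card (\<Union>(N ` X) - {b}))"
            by (cases "b \<in> \<Union>(N ` X)") (simp_all add: card_Diff_singleton_if)
          then show ?thesis using lt eq by simp
        qed
      qed
      obtain f' where f': "inj_on f' A'" "\<forall>x\<in>A'. f' x \<in> N' x"
        using less.hyps[OF cA fA fN hall'] by blast
      define f where "f = f'(a := b)"
      have "inj_on f A"
      proof -
        have A: "A = insert a A'" unfolding A'_def using aA by auto
        have "inj_on f A'" using f'(1) unfolding f_def A'_def by (auto simp: inj_on_def)
        moreover have "f a \<notin> f ` (A' - {a})" unfolding f_def using f'(2) N'_def A'_def by auto
        ultimately show ?thesis using A by simp
      qed
      moreover have "\<forall>x\<in>A. f x \<in> N x" unfolding f_def using f'(2) b N'_def A'_def by auto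
      ultimately show ?thesis by blast
    next
      case False
      then obtain X where X: "X \<subseteq> A" "X \<noteq> {}" "X \<noteq> A" "card (\<Union>(N ` X)) \<le> card X"
        by (auto simp: not_less)
      have fX: "finite X" using X(1) less.prems(1) finite_subset by blast
      have cX: "card X < card A" using X less.prems(1) by (meson psubsetI psubset_card_mono)
      have hX: "\<forall>Y\<subseteq>X. card Y \<le> card (\<Union>(N ` Y))" using X(1) less.prems(3) by auto
      obtain g where g: "inj_on g X" "\<forall>x\<in>X. g x \<in> N x"
        using less.hyps[OF cX fX _ hX] less.prems(2) X(1) by blast
      define S where "S = \<Union>(N ` X)"
      have cSX: "card S = card X" using X(4) hX X(1) S_def by (simp add: le_antisym)
      define B where "B = A - X"
      define N'' where "N'' = (\<lambda>x. N x - S)"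
      have cB: "card B < card A" unfolding B_def
        by (rule psubset_card_mono) (use X less.prems(1) in auto)
      have fB: "finite B" unfolding B_def using less.prems(1) by auto
      have fNB: "\<forall>x\<in>B. finite (N'' x)" unfolding B_def N''_def using less.prems(2) by auto
      have fS: "finite S" unfolding S_def using X(1) less.prems(2) fX by auto
      have hB: "\<forall>Y\<subseteq>B. card Y \<le> card (\<Union>(N'' ` Y))"
      proof (intro allI impI)
        fix Y assume Y: "Y \<subseteq> B"
        have fY: "finite Y" using Y fB finite_subset by blast
        have "card X + card Y = card (X \<union> Y)"
          using Y B_def fX fY by (subst card_Un_disjoint) auto
        also have "\<dots> \<le> card (\<Union>(N ` (X \<union> Y)))" using less.prems(3) X(1) Y B_def by (metis Diff_subset Un_subset_iff subset_trans)
        also have "\<Union>(N ` (X \<union> Y)) = S \<union> \<Union>(N'' ` Y)" unfolding S_def N''_def by auto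
        also have "card \<dots> \<le> card S + card (\<Union>(N'' ` Y))" by (rule card_Un_le)
        finally show "card Y \<le> card (\<Union>(N'' ` Y))" using cSX by simp
      qed
      obtain h where h: "inj_on h B" "\<forall>x\<in>B. h x \<in> N'' x"
        using less.hyps[OF cB fB fNB hB] by blast
      define f where "f = (\<lambda>x. if x \<in> X then g x else h x)"
      have "inj_on f A"
      proof (rule inj_onI)
        fix x y assume xy: "x \<in> A" "y \<in> A" "f x = f y"
        show "x = y"
        proof (cases "x \<in> X"; cases "y \<in> X")
          assume "x \<in> X" "y \<in> X" then show ?thesis using xy g(1) f_def by (auto dest: inj_onD)
        next
          assume "x \<notin> X" "y \<notin> X" then show ?thesis using xy h(1) f_def B_def by (auto dest: inj_onD)
        next
          assume a: "x \<in> X" "y \<notin> X"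
          have "f x \<in> S" using a g(2) unfolding f_def S_def by auto
          moreover have "f y \<notin> S" using a h(2) xy(2) unfolding f_def N''_def B_def by auto
          ultimately show ?thesis using xy(3) by simp
        next
          assume a: "x \<notin> X" "y \<in> X"
          have "f y \<in> S" using a g(2) unfolding f_def S_def by auto
          moreover have "f x \<notin> S" using a h(2) xy(1) unfolding f_def N''_def B_def by auto
          ultimately show ?thesis using xy(3) by simp
        qed
      qed
      moreover have "\<forall>x\<in>A. f x \<in> N x" using g(2) h(2) f_def N''_def B_def by auto
      ultimately show ?thesis by blast
    qed
  qed
qed


lemma sum_group_fst:
  fixes z :: "'a \<times> 'a \<Rightarrow> nat" and P :: "('a \<times> 'a) set"
  assumes "finite P" "finite X" "\<forall>x\<in>X. sum z {p\<in>P. h p = x} = s"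
  shows "s * card X = sum z {p\<in>P. h p \<in> X}"
proof -
  have "sum z {p\<in>P. h p \<in> X} = (\<Sum>x\<in>X. sum z {p. p \<in> {p\<in>P. h p \<in> X} \<and> h p = x})"
    by (rule sum.group[symmetric]) (use assms in auto)
  also have "\<dots> = (\<Sum>x\<in>X. s)" using assms(3) by (intro sum.cong) (auto intro!: arg_cong[where f="sum z"])
  finally show ?thesis by simp
qed

lemma edge_in: "simple_graph V E \<Longrightarrow> {a, b} \<in> E \<Longrightarrow> a \<in> V \<and> b \<in> V \<and> a \<noteq> b"
  unfolding simple_graph_def by (metis doubleton_eq_iff)

lemma fin_Z: assumes "simple_graph V E" shows "finite (Zset V E D)"
proof (rule finite_subset[of _ "V \<times> V"])
  show "Zset V E D \<subseteq> V \<times> V" using edge_in[OF assms] unfolding Zset_def by auto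
  show "finite (V \<times> V)" using assms unfolding simple_graph_def by auto
qed

lemma dir1:
  assumes G: "simple_graph V E" and s: "0 < s" and d: "dissolution s s V E D z"
  shows "\<exists>M. perfect_matching V E M"
proof -
  define Z where "Z = Zset V E D"
  have fZ: "finite Z" using fin_Z[OF G] Z_def by simp
  have fV: "finite V" using G simple_graph_def by auto
  have DV: "D \<subseteq> V" and rowD: "\<forall>x\<in>D. sum z {p\<in>Z. fst p = x} = s"
    and colR: "\<forall>y\<in>V-D. sum z {p\<in>Z. snd p = y} = s"
    using d unfolding dissolution_def Z_def by auto
  have fD: "finite D" using DV fV finite_subset by blast
  have fR: "finite (V - D)" using fV by auto
  have Zf: "\<forall>p\<in>Z. fst p \<in> D \<and> snd p \<in> V - D \<and> {fst p, snd p} \<in> E" unfolding Z_def Zset_def by auto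
  have rowX: "s * card X = sum z {p\<in>Z. fst p \<in> X}" if "X \<subseteq> D" for X
    by (rule sum_group_fst[OF fZ]) (use that rowD fD finite_subset in auto)
  have colY: "s * card Y = sum z {p\<in>Z. snd p \<in> Y}" if "Y \<subseteq> V - D" for Y
    by (rule sum_group_fst[OF fZ]) (use that colR fR finite_subset in auto)
  have "{p\<in>Z. fst p \<in> D} = Z" "{p\<in>Z. snd p \<in> V - D} = Z" using Zf by auto
  hence "s * card D = s * card (V - D)" using rowX[of D] colY[of "V - D"] by simp
  hence cDR: "card D = card (V - D)" using s by simp
  define N where "N = (\<lambda>x. {y. (x, y) \<in> Z \<and> 0 < z (x, y)})"
  have NR: "N x \<subseteq> V - D" for x using Zf unfolding N_def by force
  have hall_c: "\<forall>X\<subseteq>D. card X \<le> card (\<Union>(N ` X))"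
  proof (intro allI impI)
    fix X assume X: "X \<subseteq> D"
    have NX: "\<Union>(N ` X) \<subseteq> V - D" using NR by auto
    have "s * card X = sum z {p\<in>Z. fst p \<in> X}" using rowX[OF X] .
    also have "\<dots> = sum z ({p\<in>Z. fst p \<in> X} - {p. z p = 0})"
      by (rule sum.setdiff_irrelevant[symmetric]) (use fZ in auto)
    also have "\<dots> \<le> sum z {p\<in>Z. snd p \<in> \<Union>(N ` X)}"
      by (rule sum_mono2) (use fZ in \<open>auto simp: N_def\<close>)
    also have "\<dots> = s * card (\<Union>(N ` X))" using colY[OF NX] by simp
    finally show "card X \<le> card (\<Union>(N ` X))" using s by simp
  qed
  obtain f where f: "inj_on f D" "\<forall>x\<in>D. f x \<in> N x"
    proof -
    have "\<forall>x\<in>D. finite (N x)" using NR fR by (meson finite_subset)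
    thus ?thesis using hall[OF fD _ hall_c] that by blast
  qed
  have fZ': "\<forall>x\<in>D. (x, f x) \<in> Z" using f(2) unfolding N_def by auto
  have fimg: "f ` D = V - D"
  proof (rule card_seteq[OF fR])
    show "f ` D \<subseteq> V - D" using fZ' Zf by fastforce
    show "card (V - D) \<le> card (f ` D)" using card_image[OF f(1)] cDR by simp
  qed
  define M where "M = (\<lambda>x. {x, f x}) ` D"
  have "M \<subseteq> E" using fZ' Zf unfolding M_def by fastforce
  moreover have "\<forall>v\<in>V. \<exists>!e\<in>M. v \<in> e"
  proof
    fix v assume v: "v \<in> V"
    show "\<exists>!e\<in>M. v \<in> e"
    proof (cases "v \<in> D")
      case True
      show ?thesis
      proof (rule ex1I[of _ "{v, f v}"])
        show "{v, f v} \<in> M \<and> v \<in> {v, f v}" using True M_def by auto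
        fix e assume e: "e \<in> M \<and> v \<in> e"
        then obtain x where x: "x \<in> D" "e = {x, f x}" unfolding M_def by auto
        have "f x \<in> V - D" using fimg x(1) by auto
        hence "v = x" using e x True by auto
        thus "e = {v, f v}" using x by simp
      qed
    next
      case False
      then obtain x where x: "x \<in> D" "v = f x" using fimg v by (metis DiffI imageE)
      show ?thesis
      proof (rule ex1I[of _ "{x, f x}"])
        show "{x, f x} \<in> M \<and> v \<in> {x, f x}" using x M_def by auto
        fix e assume e: "e \<in> M \<and> v \<in> e"
        then obtain y where y: "y \<in> D" "e = {y, f y}" unfolding M_def by auto
        have "v = f y" using e y False by auto
        hence "y = x" using f(1) x y(1) inj_onD by metis
        thus "e = {x, f x}" using y by simp
      qed
    qed
  qed
  ultimately show ?thesis unfolding perfect_matching_def by blast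
qed

lemma dir2:
  assumes G: "simple_graph V E" and M: "perfect_matching V E M"
  shows "\<exists>D z. dissolution s s V E D z"
proof -
  have ME: "M \<subseteq> E" and uq: "\<forall>v\<in>V. \<exists>!e\<in>M. v \<in> e" using M unfolding perfect_matching_def by auto
  have Mform: "\<exists>x y. x \<noteq> y \<and> e = {x, y} \<and> x \<in> V \<and> y \<in> V" if "e \<in> M" for e
    using G ME that unfolding simple_graph_def by auto
  define c where "c = (\<lambda>e::'a set. SOME x. x \<in> e)"
  have ce: "c e \<in> e" if "e \<in> M" for e
    using Mform[OF that] unfolding c_def by (metis insertI1 someI)
  define D where "D = c ` M"
  define z where "z = (\<lambda>p. if {fst p, snd p} \<in> M then s else (0::nat))"
  define Z where "Z = Zset V E D"
  have fZ: "finite Z" using fin_Z[OF G] Z_def by simp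
  have MV: "e \<subseteq> V" if "e \<in> M" for e using Mform[OF that] by auto
  have DV: "D \<subseteq> V" unfolding D_def using ce MV by auto
  have same: "e = e'" if "e \<in> M" "e' \<in> M" "v \<in> e" "v \<in> e'" for e e' v
  proof -
    have "v \<in> V" using MV that(1,3) by blast
    then have "\<exists>!e. e \<in> M \<and> v \<in> e" using uq by blast
    then show ?thesis using that by blast
  qed
  have key: "\<exists>x y. {x, y} \<in> M \<and> x \<in> D \<and> y \<in> V - D \<and> x \<noteq> y \<and> c {x, y} = x \<and> v \<in> {x, y}"
    if v: "v \<in> V" for v
  proof -
    obtain e where e: "e \<in> M" "v \<in> e" using uq v by blast
    obtain a b where ab: "a \<noteq> b" "e = {a, b}" "a \<in> V" "b \<in> V" using Mform[OF e(1)] by blast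
    have cD: "c e \<in> D" using e D_def by auto
    have ca: "c e = a \<or> c e = b" using ce[OF e(1)] ab by auto
    have notD: "w \<notin> D" if "w \<in> e" "w \<noteq> c e" for w
    proof
      assume "w \<in> D"
      then obtain e' where e': "e' \<in> M" "w = c e'" unfolding D_def by auto
      have "e' = e" using same[OF e'(1) e(1)] ce[OF e'(1)] e' that by auto
      thus False using that e' by simp
    qed
    show ?thesis
    proof (cases "c e = a")
      case True
      show ?thesis
        by (rule exI[of _ a], rule exI[of _ b]) (use True ab e cD notD in auto)
    next
      case False
      hence cb: "c e = b" using ca by simp
      show ?thesis
        by (rule exI[of _ b], rule exI[of _ a]) (use cb ab e cD notD in \<open>auto simp: insert_commute\<close>)
    qed
  qed
  have zle: "\<forall>p\<in>Z. z p \<le> s" unfolding z_def by auto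
  have rows: "\<forall>v'\<in>D. sum z {p\<in>Z. fst p = v'} = s"
  proof
    fix v' assume v': "v' \<in> D"
    obtain x y where xy: "{x, y} \<in> M" "x \<in> D" "y \<in> V - D" "x \<noteq> y" "c {x, y} = x" "v' \<in> {x, y}"
      using key[of v'] v' DV by blast
    have vx: "v' = x" using xy v' by auto
    have inZ: "(x, y) \<in> Z" unfolding Z_def Zset_def using xy ME by auto
    have "sum z {p\<in>Z. fst p = v'} = sum z {(x, y)}"
    proof (rule sum.mono_neutral_right)
      show "finite {p\<in>Z. fst p = v'}" using fZ by auto
      show "{(x, y)} \<subseteq> {p\<in>Z. fst p = v'}" using inZ vx by auto
      show "\<forall>p\<in>{p\<in>Z. fst p = v'} - {(x, y)}. z p = 0"
      proof
        fix p assume p: "p \<in> {p\<in>Z. fst p = v'} - {(x, y)}"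
        show "z p = 0"
        proof (rule ccontr)
          assume "z p \<noteq> 0"
          hence pM: "{fst p, snd p} \<in> M" unfolding z_def by (auto split: if_splits)
          have "{fst p, snd p} = {x, y}" using same[OF pM xy(1), of x] p vx by auto
          moreover have "snd p \<notin> D" using p unfolding Z_def Zset_def by auto
          ultimately have "snd p = y" using xy(2) by (auto simp: doubleton_eq_iff)
          thus False using p vx by (cases p) auto
        qed
      qed
    qed
    also have "\<dots> = s" using xy(1) unfolding z_def by simp
    finally show "sum z {p\<in>Z. fst p = v'} = s" .
  qed
  have cols: "\<forall>v\<in>V - D. sum z {p\<in>Z. snd p = v} = s"
  proof
    fix v assume v: "v \<in> V - D"
    obtain x y where xy: "{x, y} \<in> M" "x \<in> D" "y \<in> V - D" "x \<noteq> y" "c {x, y} = x" "v \<in> {x, y}"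
      using key[of v] v by blast
    have vy: "v = y" using xy v by auto
    have inZ: "(x, y) \<in> Z" unfolding Z_def Zset_def using xy ME by auto
    have "sum z {p\<in>Z. snd p = v} = sum z {(x, y)}"
    proof (rule sum.mono_neutral_right)
      show "finite {p\<in>Z. snd p = v}" using fZ by auto
      show "{(x, y)} \<subseteq> {p\<in>Z. snd p = v}" using inZ vy by auto
      show "\<forall>p\<in>{p\<in>Z. snd p = v} - {(x, y)}. z p = 0"
      proof
        fix p assume p: "p \<in> {p\<in>Z. snd p = v} - {(x, y)}"
        show "z p = 0"
        proof (rule ccontr)
          assume "z p \<noteq> 0"
          hence pM: "{fst p, snd p} \<in> M" unfolding z_def by (auto split: if_splits)
          have "{fst p, snd p} = {x, y}" using same[OF pM xy(1), of y] p vy by auto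
          moreover have "fst p \<in> D" using p unfolding Z_def Zset_def by auto
          ultimately have "fst p = x" using xy(3) by (auto simp: doubleton_eq_iff)
          thus False using p vy by (cases p) auto
        qed
      qed
    qed
    also have "\<dots> = s" using xy(1) unfolding z_def by simp
    finally show "sum z {p\<in>Z. snd p = v} = s" .
  qed
  have "dissolution s s V E D z"
    unfolding dissolution_def using DV zle rows cols Z_def by auto
  thus ?thesis by blast
qed

theorem corollary3:
  fixes s :: nat and V :: "'a set" and E :: "'a set set"
  assumes "simple_graph V E" and "0 < s"
  shows "(\<exists>D z. dissolution s s V E D z) \<longleftrightarrow> (\<exists>M. perfect_matching V E M)"
  using dir1[OF assms] dir2[OF assms(1)] by blast

end
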